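(* Let $1\le p<\infty$, let $w$ be a weight, and let $\mathcal B$ be a collection of balls in $\mathbb{R}^n$ whose union is $\mathbb{R}^n$. If the maximal operator $M_{\mathcal B}$ is bounded from $\mathcal M^{p}(\varphi,w)$ to $W\mathcal M^{p}(\varphi,w)$ (in particular, if it is bounded on $\mathcal M^{p}(\varphi,w)$), then $w\in A_{\mathcal B}(\mathcal M^{p}(\varphi))$. Moreover, the operator norm of $M_{\mathcal B}$ from $\mathcal M^{p}(\varphi,w)$ to $W\mathcal M^{p}(\varphi,w)$ is bounded below by $[w]_{A_{\mathcal B}(\mathcal M^{p}(\varphi))}$.
   Context: A weight is a nonnegative locally integrable function on $\mathbb{R}^n$. Let $\varphi$ be a function from the set of Euclidean balls of $\mathbb{R}^n$ to $(0,\infty)$; standing assumptions: $\varphi$ is doubling ($\varphi(2B)\le C\varphi(B)$) and reverse doubling (there are $\delta>0$, $C$ with $\varphi(B_1)/\varphi(B_2)\le C(|B_1|/|B_2|)^\delta$ for balls $B_1\subset B_2$), and characteristic functions of balls belong to $\mathcal M^{p}(\varphi,w)$. $\mathcal M^{p}(\varphi,w)$ is the space of measurable $f$ with $\|f\|_{\mathcal M^{p}(\varphi,w)}:=\sup_B\big(\varphi(B)^{-1}\int_B|f|^pw\big)^{1/p}<\infty$ (supremum over all balls). $W\mathcal M^{p}(\varphi,w)$ is the space of measurable $f$ with $\|f\|_{W\mathcal M^{p}(\varphi,w)}:=\sup_B\sup_{t>0} t\, w(\{x\in B:|f(x)|>t\})^{1/p}\varphi(B)^{-1/p}<\infty$.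 For a Banach lattice $X$, the Köthe dual $X'$ has norm $\|g\|_{X'}:=\sup\{\int|fg|:\|f\|_X\le1\}$. $M_{\mathcal B}f(x):=\sup\{|B|^{-1}\int_B|f|: x\in B\in\mathcal B\}$. $[w]_{A_{\mathcal B}(\mathcal M^{p}(\varphi))}:=\sup_{B\in\mathcal B}\|\chi_B\|_{\mathcal M^{p}(\varphi,w)}\|\chi_B\|_{\mathcal M^{p}(\varphi,w)'}/|B|$, and $A_{\mathcal B}(\mathcal M^{p}(\varphi))$ is the class of weights for which it is finite. *)

theory Defs
  imports "HOL-Analysis.Analysis"
begin

definition balls :: "'a::euclidean_space set set" where
  "balls = {ball x r | x r. r > 0}"

definition enn_root :: "real \<Rightarrow> ennreal \<Rightarrow> ennreal" where
  "enn_root p t = (if t = \<infinity> then \<infinity> else ennreal (enn2real t powr (1 / p)))"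

definition is_weight :: "('a::euclidean_space \<Rightarrow> real) \<Rightarrow> bool" where
  "is_weight w \<longleftrightarrow> w \<in> borel_measurable lebesgue \<and> (\<forall>x. 0 \<le> w x)
     \<and> (\<forall>K. compact K \<longrightarrow> set_integrable lebesgue K w)"

definition wmeas :: "('a::euclidean_space \<Rightarrow> real) \<Rightarrow> 'a set \<Rightarrow> ennreal" where
  "wmeas w E = (\<integral>\<^sup>+ x \<in> E. ennreal (w x) \<partial>lebesgue)"

definition morrey_norm :: "real \<Rightarrow> ('a::euclidean_space set \<Rightarrow> real) \<Rightarrow> ('a \<Rightarrow> real)
    \<Rightarrow> ('a \<Rightarrow> real) \<Rightarrow> ennreal" where
  "morrey_norm p \<phi> w f = (SUP B \<in> balls.
      enn_root p ((\<integral>\<^sup>+ x \<in> B. ennreal (\<bar>f x\<bar> powr p * w x) \<partial>lebesgue) / ennreal (\<phi> B)))"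

definition morrey_space :: "real \<Rightarrow> ('a::euclidean_space set \<Rightarrow> real) \<Rightarrow> ('a \<Rightarrow> real)
    \<Rightarrow> ('a \<Rightarrow> real) set" where
  "morrey_space p \<phi> w = {f. f \<in> borel_measurable lebesgue \<and> morrey_norm p \<phi> w f < \<infinity>}"

text \<open>Weighted weak Morrey norm of WM^p(phi,w), for [0,\<infinity>]-valued functions
  (a real function f is treated via its modulus |f|).\<close>
definition weak_morrey_norm :: "real \<Rightarrow> ('a::euclidean_space set \<Rightarrow> real) \<Rightarrow> ('a \<Rightarrow> real)
    \<Rightarrow> ('a \<Rightarrow> ennreal) \<Rightarrow> ennreal" where
  "weak_morrey_norm p \<phi> w f = (SUP B \<in> balls. SUP t \<in> {0<..}.
      ennreal t * enn_root p (wmeas w {x \<in> B. f x > ennreal t} / ennreal (\<phi> B)))"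

definition morrey_dual_norm :: "real \<Rightarrow> ('a::euclidean_space set \<Rightarrow> real) \<Rightarrow> ('a \<Rightarrow> real)
    \<Rightarrow> ('a \<Rightarrow> real) \<Rightarrow> ennreal" where
  "morrey_dual_norm p \<phi> w g = (SUP f \<in> {f. f \<in> borel_measurable lebesgue \<and> morrey_norm p \<phi> w f \<le> 1}.
      \<integral>\<^sup>+ x. ennreal \<bar>f x * g x\<bar> \<partial>lebesgue)"

definition maximal_op :: "'a::euclidean_space set set \<Rightarrow> ('a \<Rightarrow> real) \<Rightarrow> 'a \<Rightarrow> ennreal" where
  "maximal_op \<B> f x = (SUP B \<in> {B \<in> \<B>. x \<in> B}.
      (\<integral>\<^sup>+ y \<in> B. ennreal \<bar>f y\<bar> \<partial>lebesgue) / emeasure lebesgue B)"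

definition A_const :: "'a::euclidean_space set set \<Rightarrow> real \<Rightarrow> ('a set \<Rightarrow> real) \<Rightarrow> ('a \<Rightarrow> real) \<Rightarrow> ennreal" where
  "A_const \<B> p \<phi> w = (SUP B \<in> \<B>.
      morrey_norm p \<phi> w (indicator B) * morrey_dual_norm p \<phi> w (indicator B) / emeasure lebesgue B)"

end

theory Submission
  imports Defs
begin

lemma sup_lem: assumes "\<And>t. 0<t \<Longrightarrow> ennreal t < A \<Longrightarrow> ennreal t * N \<le> Y" shows "A * N \<le> (Y::ennreal)"
proof -
  have "A = Sup {..<A}" by (rule Sup_lessThan[symmetric]) 
  hence "A * N = (SUP x\<in>{..<A}. x) * N" by simp
  also have "\<dots> = (SUP x\<in>{..<A}. x * N)" by (rule SUP_mult_right_ennreal)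
  also have "\<dots> \<le> Y"
  proof (rule SUP_least)
    fix x assume "x \<in> {..<A}"
    hence xa: "x < A" by simp
    have "x < top" using less_le_trans[OF xa top_greatest] .
    then obtain t where t: "x = ennreal t" "0 \<le> t" using less_top_ennreal by auto
    show "x * N \<le> Y"
    proof (cases "t = 0")
      case True then show ?thesis using t by simp
    next
      case False then have "0 < t" using t by simp
      then show ?thesis using t xa assms by blast
    qed
  qed
  finally show ?thesis .
qed

lemma enn_root_mono:
  assumes "0 < p" "a \<le> b" shows "enn_root p a \<le> enn_root p b"
proof (cases "b = \<infinity>")
  case True then show ?thesis by (simp add: enn_root_def)
next
  case False
  hence bt: "b < top" by (simp add: top.not_eq_extremum)
  hence "a \<noteq> \<infinity>" using assms(2) by auto
  moreover have "enn2real a \<le> enn2real b" using enn2real_mono[OF assms(2) bt] .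
  hence "enn2real a powr (1/p) \<le> enn2real b powr (1/p)"
    using assms(1) by (intro powr_mono2) auto
  ultimately show ?thesis using False by (simp add: enn_root_def ennreal_leI)
qed

lemma ball_sets_lebesgue: "B \<in> balls \<Longrightarrow> B \<in> sets lebesgue"
  unfolding balls_def by (auto intro: fmeasurableD[OF lmeasurable_ball])

theorem theorem3p1:
  fixes p :: real and \<phi> :: "'a::euclidean_space set \<Rightarrow> real" and w :: "'a \<Rightarrow> real"
    and \<B> :: "'a set set" and C :: real
  assumes p: "1 \<le> p"
    and phi_pos: "\<forall>B \<in> balls. 0 < \<phi> B"
    and phi_doubling: "\<exists>D. \<forall>x r. r > 0 \<longrightarrow> \<phi> (ball x (2 * r)) \<le> D * \<phi> (ball x r)"
    and phi_rev_doubling: "\<exists>\<delta> > 0. \<exists>D. \<forall>B1 \<in> balls. \<forall>B2 \<in> balls. B1 \<subseteq> B2 \<longrightarrow>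
           \<phi> B1 / \<phi> B2 \<le> D * (measure lebesgue B1 / measure lebesgue B2) powr \<delta>"
    and w: "is_weight w"
    and chi_balls: "\<forall>B \<in> balls. indicator B \<in> morrey_space p \<phi> w"
    and B_balls: "\<B> \<subseteq> balls"
    and B_cover: "\<Union>\<B> = UNIV"
    and bounded: "\<forall>f \<in> morrey_space p \<phi> w.
           weak_morrey_norm p \<phi> w (maximal_op \<B> f) \<le> ennreal C * morrey_norm p \<phi> w f"
  shows "A_const \<B> p \<phi> w < \<infinity> \<and> A_const \<B> p \<phi> w \<le> ennreal C"
proof -
  have p0: "0 < p" using p by simp
  have w0: "\<And>x. 0 \<le> w x" using w by (simp add: is_weight_def)
  have main: "morrey_norm p \<phi> w (indicator B) * morrey_dual_norm p \<phi> w (indicator B) / emeasure lebesgue B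
      \<le> ennreal C" if BB: "B \<in> \<B>" for B
  proof -
    define N where "N = morrey_norm p \<phi> w (indicator B)"
    define F where "F = {f. f \<in> borel_measurable lebesgue \<and> morrey_norm p \<phi> w f \<le> 1}"
    define I where "I = (\<lambda>f. \<integral>\<^sup>+ x. ennreal \<bar>f x * indicator B x\<bar> \<partial>lebesgue)"
    have Bb: "B \<in> balls" using BB B_balls by auto
    have Bs: "B \<in> sets lebesgue" using ball_sets_lebesgue[OF Bb] .
    have "N * morrey_dual_norm p \<phi> w (indicator B) / emeasure lebesgue B
        = (N * (SUP f\<in>F. I f)) * inverse (emeasure lebesgue B)"
      unfolding morrey_dual_norm_def F_def I_def by (simp add: divide_ennreal_def)
    also have "\<dots> = (SUP f\<in>F. N * I f * inverse (emeasure lebesgue B))"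
      by (simp add: SUP_mult_left_ennreal SUP_mult_right_ennreal)
    also have "\<dots> \<le> ennreal C"
    proof (rule SUP_least)
      fix f assume "f \<in> F"
      hence fm: "f \<in> borel_measurable lebesgue" and fn: "morrey_norm p \<phi> w f \<le> 1"
        unfolding F_def by auto
      define g where "g = (\<lambda>x. f x * indicator B x :: real)"
      define A where "A = (\<integral>\<^sup>+ y\<in>B. ennreal \<bar>g y\<bar> \<partial>lebesgue) / emeasure lebesgue B"
      have IA: "I f * inverse (emeasure lebesgue B) = A"
      proof -
        have "I f = (\<integral>\<^sup>+ y\<in>B. ennreal \<bar>g y\<bar> \<partial>lebesgue)"
          unfolding I_def g_def by (intro nn_integral_cong) (auto simp: indicator_def)
        thus ?thesis unfolding A_def by (simp add: divide_ennreal_def)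
      qed
      have gm: "g \<in> borel_measurable lebesgue"
        unfolding g_def using fm Bs by (intro borel_measurable_times borel_measurable_indicator) auto
      have gn: "morrey_norm p \<phi> w g \<le> morrey_norm p \<phi> w f"
        unfolding morrey_norm_def
      proof (rule SUP_mono)
        fix B' :: "'a set" assume "B' \<in> balls"
        show "\<exists>m\<in>balls. enn_root p ((\<integral>\<^sup>+ x\<in>B'. ennreal (\<bar>g x\<bar> powr p * w x) \<partial>lebesgue) / ennreal (\<phi> B'))
           \<le> enn_root p ((\<integral>\<^sup>+ x\<in>m. ennreal (\<bar>f x\<bar> powr p * w x) \<partial>lebesgue) / ennreal (\<phi> m))"
        proof (intro bexI[OF _ \<open>B' \<in> balls\<close>] enn_root_mono[OF p0] divide_right_mono_ennreal
               nn_integral_mono)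
          fix x
          have "\<bar>g x\<bar> \<le> \<bar>f x\<bar>" unfolding g_def by (auto simp: indicator_def)
          hence "\<bar>g x\<bar> powr p * w x \<le> \<bar>f x\<bar> powr p * w x"
            using w0[of x] p0 by (intro mult_right_mono powr_mono2) auto
          thus "ennreal (\<bar>g x\<bar> powr p * w x) * indicator B' x \<le> ennreal (\<bar>f x\<bar> powr p * w x) * indicator B' x"
            by (intro mult_right_mono[OF ennreal_leI]) auto
        qed
      qed
      have gM: "g \<in> morrey_space p \<phi> w"
        proof -
        have "morrey_norm p \<phi> w g \<le> 1" using gn fn by (rule order_trans)
        hence "morrey_norm p \<phi> w g < \<infinity>" by (rule le_less_trans) simp
        thus ?thesis unfolding morrey_space_def using gm by simp
      qed
      have Mg: "A \<le> maximal_op \<B> g x" if "x \<in> B" for x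
        unfolding maximal_op_def A_def using that BB by (intro SUP_upper) auto
      have key: "ennreal t * N \<le> ennreal C" if t0: "0 < t" and tA: "ennreal t < A" for t
      proof -
        have "ennreal t * N = (SUP B'\<in>balls. ennreal t * enn_root p ((\<integral>\<^sup>+ x\<in>B'. ennreal (\<bar>indicator B x :: real\<bar> powr p * w x) \<partial>lebesgue) / ennreal (\<phi> B')))"
          unfolding N_def morrey_norm_def by (simp add: SUP_mult_left_ennreal)
        also have "\<dots> \<le> ennreal C"
        proof (rule SUP_least)
          fix B' :: "'a set" assume B'b: "B' \<in> balls"
          have "(\<integral>\<^sup>+ x\<in>B'. ennreal (\<bar>indicator B x :: real\<bar> powr p * w x) \<partial>lebesgue)
              \<le> wmeas w {x \<in> B'. maximal_op \<B> g x > ennreal t}"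
            unfolding wmeas_def
          proof (rule nn_integral_mono)
            fix x
            show "ennreal (\<bar>indicator B x :: real\<bar> powr p * w x) * indicator B' x
                \<le> ennreal (w x) * indicator {x \<in> B'. maximal_op \<B> g x > ennreal t} x"
            proof (cases "x \<in> B \<and> x \<in> B'")
              case True
              hence "maximal_op \<B> g x > ennreal t" using Mg[of x] tA by auto
              thus ?thesis using True by (simp add: indicator_def)
            next
              case False thus ?thesis by (auto simp: indicator_def)
            qed
          qed
          hence "ennreal t * enn_root p ((\<integral>\<^sup>+ x\<in>B'. ennreal (\<bar>indicator B x :: real\<bar> powr p * w x) \<partial>lebesgue) / ennreal (\<phi> B'))
             \<le> ennreal t * enn_root p (wmeas w {x \<in> B'. maximal_op \<B> g x > ennreal t} / ennreal (\<phi> B'))"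
            by (intro mult_left_mono enn_root_mono[OF p0] divide_right_mono_ennreal) auto
          also have "\<dots> \<le> weak_morrey_norm p \<phi> w (maximal_op \<B> g)"
            unfolding weak_morrey_norm_def using B'b t0
            by (intro SUP_upper2[OF B'b] SUP_upper2[of t]) auto
          also have "\<dots> \<le> ennreal C * morrey_norm p \<phi> w g" using bounded gM by auto
          also have "\<dots> \<le> ennreal C * 1" using gn fn by (intro mult_left_mono) auto
          finally show "ennreal t * enn_root p ((\<integral>\<^sup>+ x\<in>B'. ennreal (\<bar>indicator B x :: real\<bar> powr p * w x) \<partial>lebesgue) / ennreal (\<phi> B')) \<le> ennreal C"
            by simp
        qed
        finally show ?thesis .
      qed
      have "A * N \<le> ennreal C" by (rule sup_lem) (use key in auto)
      thus "N * I f * inverse (emeasure lebesgue B) \<le> ennreal C"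
        using IA by (simp add: ac_simps)
    qed
    finally show ?thesis unfolding N_def .
  qed
  have A: "A_const \<B> p \<phi> w \<le> ennreal C"
    unfolding A_const_def by (rule SUP_least) (use main in auto)
  moreover have "A_const \<B> p \<phi> w < \<infinity>" using A le_less_trans by fastforce
  ultimately show ?thesis by simp
qed

end
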